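(* Consider the HIST algorithm described in the context, suppose Assumptions (A2), (A3), (A4), (A5) and (A6) hold and $\gamma\le\frac1{\sqrt{15}HL}$. Then for every global round $t$, $$Q_t\le5\gamma^2H^2L^2D_t+5\gamma^2NH^2\sum_{e=0}^{E-1}\mathbb E\|\nabla f(\hat x^{t,e})\|^2+2\gamma^2NHE\sigma^2+5\gamma^2NH^2E\delta_2^2+5\gamma^2NH^2E\delta_1^2,$$ where $D_t=\sum_{j=1}^N\sum_{e=0}^{E-1}\mathbb E\|\hat x^{t,e}-\bar x^{t,e}_j\|^2$ and $Q_t=\sum_{j=1}^N\frac1{n_j}\sum_{i\in\mathcal C_j}\frac1H\sum_{e=0}^{E-1}\sum_{h=0}^{H-1}\mathbb E\|\bar x^{t,e}_j-x^{t,e}_{i,h}\|^2$.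
   Context: Hierarchical federated learning: $N$ cells $j=1,\dots,N$; cell $j$ has a set $\mathcal C_j$ of $n_j$ clients (disjoint). Model $x\in\mathbb R^d$. Client $i$ has distribution $\mathcal D_i$, per-sample loss $l(x,\xi)$, $F_i(x)=\mathbb E_{\xi\sim\mathcal D_i}l(x,\xi)$; $f_j=\frac1{n_j}\sum_{i\in\mathcal C_j}F_i$; $f=\frac1N\sum_jf_j$. $\odot$ is the Hadamard product, $\mathbf 1$ the all-ones vector. HIST algorithm (step size $\gamma$, integers $T,E,H\ge1$, initial $\bar x^0$). For each global round $t$: binary masks $p^t_1,\dots,p^t_N\in\{0,1\}^d$ with $p^t_j\odot p^t_{j'}=0$ ($j\ne j'$), $\sum_jp^t_j=\mathbf 1$. Set $\bar x^{t,0}_j=p^t_j\odot\bar x^t$, $x^{t,0}_{i,0}=\bar x^{t,0}_j$ for $i\in\mathcal C_j$. For $e=0,\dots,E-1$: each client $i\in\mathcal C_j$ does $x^{t,e}_{i,h+1}=x^{t,e}_{i,h}-\gamma p^t_j\odot\nabla l(x^{t,e}_{i,h},\xi^{t,e}_{i,h})$, $h=0,\dots,H-1$, with fresh $\xi^{t,e}_{i,h}\sim\mathcal D_i$; then $\bar x^{t,e+1}_j=\frac1{n_j}\sum_{i\in\mathcal C_j}x^{t,e}_{i,H}$ and $x^{t,e+1}_{i,0}=\bar x^{t,e+1}_j$. Finally $\bar x^{t+1}=\sum_j\bar x^{t,E}_j$. Virtual iterates $\hat x^{t,e}=\sum_j\bar x^{t,e}_j$. Expectations are over all randomness. Assumptions.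 (A2) each $F_i$ differentiable, $\|\nabla F_i(x)-\nabla F_i(y)\|\le L\|x-y\|$ and $F_i(y)\le F_i(x)+\langle\nabla F_i(x),y-x\rangle+\frac L2\|y-x\|^2$. (A3) $\mathbb E_{\xi\sim\mathcal D_i}\nabla l(x,\xi)=\nabla F_i(x)$. (A4) $\mathbb E_{\xi\sim\mathcal D_i}\|\nabla l(x,\xi)-\nabla F_i(x)\|^2\le\sigma^2$. (A5) $\frac1N\sum_j\|\nabla f_j(x)-\nabla f(x)\|^2\le\delta_1^2$. (A6) $\frac1{n_j}\sum_{i\in\mathcal C_j}\|\nabla F_i(x)-\nabla f_j(x)\|^2\le\delta_2^2$; all for every $x,i,j$. *)

theory Defs
  imports "HOL-Probability.Probability"
begin

text \<open>Hadamard product on real^'d is the componentwise product (*) of the vec type;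
  the all-ones vector is 1.\<close>

text \<open>Local SGD steps of one client within one cell-round:
  m = mask p_j, s h = sample xi_{i,h}^{t,e}, y = starting point x_{i,0}^{t,e}.\<close>
primrec hist_loc ::
  "(real^'d \<Rightarrow> 'b \<Rightarrow> real^'d) \<Rightarrow> real \<Rightarrow> real^'d \<Rightarrow> (nat \<Rightarrow> 'b) \<Rightarrow> real^'d \<Rightarrow> nat \<Rightarrow> real^'d"
where
  "hist_loc g \<gamma> m s y 0 = y"
| "hist_loc g \<gamma> m s y (Suc h) =
     hist_loc g \<gamma> m s y h - \<gamma> *\<^sub>R (m * g (hist_loc g \<gamma> m s y h) (s h))"

primrec hist_bar ::
  "(real^'d \<Rightarrow> 'b \<Rightarrow> real^'d) \<Rightarrow> real \<Rightarrow> nat \<Rightarrow> (nat \<Rightarrow> nat set) \<Rightarrow> (nat \<Rightarrow> real^'d)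
    \<Rightarrow> (nat \<Rightarrow> nat \<Rightarrow> nat \<Rightarrow> 'b) \<Rightarrow> real^'d \<Rightarrow> nat \<Rightarrow> nat \<Rightarrow> real^'d"
where
  "hist_bar g \<gamma> H C p \<xi> x0 0 j = p j * x0"
| "hist_bar g \<gamma> H C p \<xi> x0 (Suc e) j =
     (1 / real (card (C j))) *\<^sub>R
       (\<Sum>i\<in>C j. hist_loc g \<gamma> (p j) (\<xi> i e) (hist_bar g \<gamma> H C p \<xi> x0 e j) H)"

definition hist_x ::
  "(real^'d \<Rightarrow> 'b \<Rightarrow> real^'d) \<Rightarrow> real \<Rightarrow> nat \<Rightarrow> (nat \<Rightarrow> nat set) \<Rightarrow> (nat \<Rightarrow> real^'d)
    \<Rightarrow> (nat \<Rightarrow> nat \<Rightarrow> nat \<Rightarrow> 'b) \<Rightarrow> real^'d \<Rightarrow> nat \<Rightarrow> nat \<Rightarrow> nat \<Rightarrow> nat \<Rightarrow> real^'d"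
where
  "hist_x g \<gamma> H C p \<xi> x0 j i e h = hist_loc g \<gamma> (p j) (\<xi> i e) (hist_bar g \<gamma> H C p \<xi> x0 e j) h"

definition hist_hat ::
  "(real^'d \<Rightarrow> 'b \<Rightarrow> real^'d) \<Rightarrow> real \<Rightarrow> nat \<Rightarrow> (nat \<Rightarrow> nat set) \<Rightarrow> (nat \<Rightarrow> real^'d)
    \<Rightarrow> (nat \<Rightarrow> nat \<Rightarrow> nat \<Rightarrow> 'b) \<Rightarrow> real^'d \<Rightarrow> nat \<Rightarrow> nat \<Rightarrow> real^'d"
where
  "hist_hat g \<gamma> H C p \<xi> x0 N e = (\<Sum>j\<in>{1..N}. hist_bar g \<gamma> H C p \<xi> x0 e j)"

definition grad_fj :: "(nat \<Rightarrow> real^'d \<Rightarrow> real^'d) \<Rightarrow> (nat \<Rightarrow> nat set) \<Rightarrow> nat \<Rightarrow> real^'d \<Rightarrow> real^'d"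
  where "grad_fj gF C j x = (1 / real (card (C j))) *\<^sub>R (\<Sum>i\<in>C j. gF i x)"

definition grad_f :: "(nat \<Rightarrow> real^'d \<Rightarrow> real^'d) \<Rightarrow> (nat \<Rightarrow> nat set) \<Rightarrow> nat \<Rightarrow> real^'d \<Rightarrow> real^'d"
  where "grad_f gF C N x = (1 / real N) *\<^sub>R (\<Sum>j\<in>{1..N}. grad_fj gF C j x)"

end

theory Submission
  imports Defs
begin
lemma cont_vmult: "continuous_on UNIV (\<lambda>(a::real^'d, b). a * b)"
proof -
  have "(\<lambda>(a::real^'d, b). a * b) = (\<lambda>x. \<chi> i. fst x $ i * snd x $ i)"
    by (auto simp: times_vec_def)
  then show ?thesis by (simp only:) (intro continuous_intros)
qed

lemma meas_vmult[measurable (raw)]: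
  fixes f g :: "'a \<Rightarrow> real^'d"
  assumes "f \<in> borel_measurable M" "g \<in> borel_measurable M"
  shows "(\<lambda>x. f x * g x) \<in> borel_measurable M"
  using assms by (rule borel_measurable_continuous_Pair) (use cont_vmult in \<open>simp add: case_prod_beta\<close>)

lemma norm_mask_le:
  fixes m v :: "real^'d"
  assumes "\<And>k. m $ k \<in> {0,1}"
  shows "norm (m * v) \<le> norm v"
proof -
  have "(vec_nth (m * v) k)\<^sup>2 \<le> (vec_nth v k)\<^sup>2" for k
  proof -
    have "m $ k = 0 \<or> m $ k = 1" using assms[of k] by simp
    then show ?thesis by (auto simp: times_vec_def)
  qed
  then show ?thesis unfolding norm_vec_def L2_set_def
    by (intro real_sqrt_le_mono sum_mono) (auto simp: real_norm_def)
qed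

lemma inner_mask_swap:
  fixes m a b :: "real^'d"
  shows "a \<bullet> (m * b) = (m * a) \<bullet> b"
  by (simp add: inner_vec_def times_vec_def algebra_simps)

lemma hist_loc_cong:
  assumes "\<And>k. k < h \<Longrightarrow> s k = s' k"
  shows "hist_loc g \<gamma> m s y h = hist_loc g \<gamma> m s' y h"
  using assms by (induction h) auto

lemma hist_bar_cong:
  assumes "\<And>i e' hh. e' < e \<Longrightarrow> \<xi> i e' hh = \<xi>' i e' hh"
  shows "hist_bar g \<gamma> H C p \<xi> x0 e j = hist_bar g \<gamma> H C p \<xi>' x0 e j"
  using assms
proof (induction e arbitrary: j)
  case 0 then show ?case by simp
next
  case (Suc e)
  have IH: "hist_bar g \<gamma> H C p \<xi> x0 e j' = hist_bar g \<gamma> H C p \<xi>' x0 e j'" for j'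
    using Suc by auto
  have "\<xi> i e = \<xi>' i e" for i using Suc.prems by auto
  then show ?case by (simp add: IH)
qed

lemma hist_loc_decomp:
  "hist_loc g \<gamma> m s y h - y =
     - \<gamma> *\<^sub>R ((\<Sum>k<h. m * (g (hist_loc g \<gamma> m s y k) (s k) - G (hist_loc g \<gamma> m s y k)))
            + (\<Sum>k<h. m * G (hist_loc g \<gamma> m s y k)))"
proof (induction h)
  case 0 then show ?case by simp
next
  case (Suc h)
  have "hist_loc g \<gamma> m s y (Suc h) - y = (hist_loc g \<gamma> m s y h - y)
     - \<gamma> *\<^sub>R (m * (g (hist_loc g \<gamma> m s y h) (s h) - G (hist_loc g \<gamma> m s y h)) + m * G (hist_loc g \<gamma> m s y h))"
    by (simp add: algebra_simps)
  also have "\<dots> = - \<gamma> *\<^sub>R ((\<Sum>k<Suc h. m * (g (hist_loc g \<gamma> m s y k) (s k) - G (hist_loc g \<gamma> m s y k)))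
            + (\<Sum>k<Suc h. m * G (hist_loc g \<gamma> m s y k)))"
    unfolding Suc by (simp add: algebra_simps)
  finally show ?case .
qed

lemma norm_sum_sq_le:
  fixes v :: "nat \<Rightarrow> 'a::real_normed_vector"
  shows "(norm (\<Sum>k<h. v k))\<^sup>2 \<le> real h * (\<Sum>k<h. (norm (v k))\<^sup>2)"
proof -
  have "(norm (\<Sum>k<h. v k))\<^sup>2 \<le> (\<Sum>k<h. norm (v k))\<^sup>2"
    by (intro power_mono norm_sum) auto
  also have "\<dots> \<le> real h * (\<Sum>k<h. (norm (v k))\<^sup>2)"
    using Cauchy_Schwarz_ineq_sum[of "\<lambda>_. 1::real" "\<lambda>k. norm (v k)" "{..<h}"] by simp
  finally show ?thesis .
qed

locale histc =
  fixes N E H :: nat and C :: "nat \<Rightarrow> nat set" and D :: "nat \<Rightarrow> 'b measure"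
    and gl :: "real^'d \<Rightarrow> 'b \<Rightarrow> real^'d" and gF :: "nat \<Rightarrow> real^'d \<Rightarrow> real^'d"
    and \<gamma> L \<sigma> \<delta>\<^sub>1 \<delta>\<^sub>2 :: real and P0 :: "'o measure" and x0 :: "'o \<Rightarrow> real^'d"
    and p :: "'o \<Rightarrow> nat \<Rightarrow> real^'d"
  assumes N: "N \<ge> 1" and H: "H \<ge> 1"
    and C_fin: "\<And>j. j \<in> {1..N} \<Longrightarrow> finite (C j)"
    and C_ne: "\<And>j. j \<in> {1..N} \<Longrightarrow> C j \<noteq> {}"
    and D_prob: "\<And>i. i \<in> (\<Union>j\<in>{1..N}. C j) \<Longrightarrow> prob_space (D i)"
    and gl_meas: "\<And>i. i \<in> (\<Union>j\<in>{1..N}. C j) \<Longrightarrow> (\<lambda>(x, \<xi>'). gl x \<xi>') \<in> borel_measurable (borel \<Otimes>\<^sub>M D i)"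
    and A2_lip: "\<And>i x y. i \<in> (\<Union>j\<in>{1..N}. C j) \<Longrightarrow> norm (gF i x - gF i y) \<le> L * norm (x - y)"
    and A3: "\<And>i x. i \<in> (\<Union>j\<in>{1..N}. C j) \<Longrightarrow> integrable (D i) (\<lambda>\<xi>'. gl x \<xi>') \<and> (\<integral>\<xi>'. gl x \<xi>' \<partial>D i) = gF i x"
    and A4: "\<And>i x. i \<in> (\<Union>j\<in>{1..N}. C j) \<Longrightarrow> (\<integral>\<^sup>+\<xi>'. ennreal ((norm (gl x \<xi>' - gF i x))\<^sup>2) \<partial>D i) \<le> ennreal (\<sigma>\<^sup>2)"
    and A5: "\<And>x. (1 / real N) * (\<Sum>j\<in>{1..N}. (norm (grad_fj gF C j x - grad_f gF C N x))\<^sup>2) \<le> \<delta>\<^sub>1\<^sup>2"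
    and A6: "\<And>j x. j \<in> {1..N} \<Longrightarrow>
       (1 / real (card (C j))) * (\<Sum>i\<in>C j. (norm (gF i x - grad_fj gF C j x))\<^sup>2) \<le> \<delta>\<^sub>2\<^sup>2"
    and P0_prob: "prob_space P0"
    and x0_meas: "x0 \<in> borel_measurable P0"
    and p_meas: "\<And>j. (\<lambda>\<omega>. p \<omega> j) \<in> borel_measurable P0"
    and p_binary: "\<And>\<omega> j k. j \<in> {1..N} \<Longrightarrow> p \<omega> j $ k \<in> {0, 1}"
    and \<gamma>_pos: "\<gamma> > 0" and L_pos: "L > 0"
    and \<gamma>_le: "\<gamma> \<le> 1 / (sqrt 15 * real H * L)"
begin

definition "Cl = (\<Union>j\<in>{1..N}. C j)"
definition "I = {(i, e, h). i \<in> Cl \<and> e < E \<and> h < H}"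
definition "M = P0 \<Otimes>\<^sub>M (\<Pi>\<^sub>M k\<in>I. D (fst k))"
definition "\<xi> = (\<lambda>\<omega> :: 'o \<times> (nat \<times> nat \<times> nat \<Rightarrow> 'b). \<lambda>i e h. snd \<omega> (i, e, h))"
definition "DD k = (if k \<in> I then D (fst k) else count_space {undefined})"

lemma Cl_fin: "finite Cl" unfolding Cl_def using C_fin by auto

lemma I_fin: "finite I"
proof -
  have "I \<subseteq> Cl \<times> {..<E} \<times> {..<H}" unfolding I_def by auto
  then show ?thesis using Cl_fin finite_subset by blast
qed

lemma DD_prob: "prob_space (DD k)"
proof (cases "k \<in> I")
  case True
  then have "fst k \<in> Cl" unfolding I_def by auto
  then show ?thesis using True D_prob unfolding DD_def Cl_def by auto
next
  case False
  then show ?thesis unfolding DD_def by (auto intro!: prob_spaceI)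
qed

lemma DD_psf: "product_sigma_finite DD"
  unfolding product_sigma_finite_def using DD_prob prob_space_imp_sigma_finite by blast

lemma Pi_eq: "(\<Pi>\<^sub>M k\<in>J. D (fst k)) = (\<Pi>\<^sub>M k\<in>J. DD k)" if "J \<subseteq> I"
  using that by (intro PiM_cong) (auto simp: DD_def)

lemma M_eq: "M = P0 \<Otimes>\<^sub>M (\<Pi>\<^sub>M k\<in>I. DD k)"
  unfolding M_def using Pi_eq by simp

lemma Pi_prob: "prob_space (\<Pi>\<^sub>M k\<in>J. DD k)"
  by (rule prob_space_PiM) (rule DD_prob)

lemma M_prob: "prob_space M"
  unfolding M_eq by (rule prob_space_pair[OF P0_prob Pi_prob])

lemma meas_comp[measurable]: "k \<in> I \<Longrightarrow> (\<lambda>\<omega>. snd \<omega> k) \<in> measurable M (D (fst k))"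
  unfolding M_def by measurable

lemma meas_xi: "(i, e, h) \<in> I \<Longrightarrow> (\<lambda>\<omega>. \<xi> \<omega> i e h) \<in> measurable M (D i)"
  unfolding \<xi>_def using meas_comp by fastforce

lemma meas_gl:
  assumes "i \<in> Cl" "X \<in> borel_measurable K" "Z \<in> measurable K (D i)"
  shows "(\<lambda>\<omega>. gl (X \<omega>) (Z \<omega>)) \<in> borel_measurable K"
proof -
  have "(\<lambda>\<omega>. (X \<omega>, Z \<omega>)) \<in> measurable K (borel \<Otimes>\<^sub>M D i)"
    using assms by measurable
  from measurable_comp[OF this gl_meas] assms(1) show ?thesis
    by (simp add: Cl_def comp_def)
qed

lemma gF_cont: "i \<in> Cl \<Longrightarrow> continuous_on UNIV (gF i)"
  by (rule lipschitz_on_continuous_on[of L])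
     (use A2_lip in \<open>auto simp: lipschitz_on_def dist_norm Cl_def L_pos less_imp_le\<close>)

lemma meas_gF:
  assumes "i \<in> Cl" "X \<in> borel_measurable K"
  shows "(\<lambda>\<omega>. gF i (X \<omega>)) \<in> borel_measurable K"
  using measurable_comp[OF assms(2) borel_measurable_continuous_onI[OF gF_cont[OF assms(1)]]]
  by (simp add: comp_def)

lemma meas_p[measurable]: "(\<lambda>\<omega>. p (fst \<omega>) j) \<in> borel_measurable M"
  unfolding M_def using p_meas by measurable

lemma meas_x0[measurable]: "(\<lambda>\<omega>. x0 (fst \<omega>)) \<in> borel_measurable M"
  unfolding M_def using x0_meas by measurable

lemma meas_loc:
  assumes j: "j \<in> {1..N}" and i: "i \<in> C j" and e: "e < E" and Y: "Y \<in> borel_measurable M"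
  shows "h \<le> H \<Longrightarrow> (\<lambda>\<omega>. hist_loc gl \<gamma> (p (fst \<omega>) j) (\<xi> \<omega> i e) (Y \<omega>) h) \<in> borel_measurable M"
proof (induction h)
  case 0 then show ?case using Y by simp
next
  case (Suc h)
  have iC: "i \<in> Cl" using i j by (auto simp: Cl_def)
  have "(i, e, h) \<in> I" using Suc.prems iC e by (auto simp: I_def)
  then have "(\<lambda>\<omega>. gl (hist_loc gl \<gamma> (p (fst \<omega>) j) (\<xi> \<omega> i e) (Y \<omega>) h) (\<xi> \<omega> i e h)) \<in> borel_measurable M"
    using meas_gl[OF iC Suc.IH meas_xi] Suc.prems by simp
  then show ?case using Suc by simp measurable
qed

lemma meas_bar:
  "e \<le> E \<Longrightarrow> j \<in> {1..N} \<Longrightarrow> (\<lambda>\<omega>. hist_bar gl \<gamma> H C (p (fst \<omega>)) (\<xi> \<omega>) (x0 (fst \<omega>)) e j) \<in> borel_measurable M"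
proof (induction e arbitrary: j)
  case 0 then show ?case by simp measurable
next
  case (Suc e)
  have "(\<lambda>\<omega>. hist_loc gl \<gamma> (p (fst \<omega>) j) (\<xi> \<omega> i e) (hist_bar gl \<gamma> H C (p (fst \<omega>)) (\<xi> \<omega>) (x0 (fst \<omega>)) e j) H) \<in> borel_measurable M"
    if "i \<in> C j" for i
    using Suc that by (intro meas_loc) auto
  then show ?case by simp measurable
qed

lemma meas_hat:
  "e \<le> E \<Longrightarrow> (\<lambda>\<omega>. hist_hat gl \<gamma> H C (p (fst \<omega>)) (\<xi> \<omega>) (x0 (fst \<omega>)) N e) \<in> borel_measurable M"
  unfolding hist_hat_def using meas_bar by measurable

end

context histc begin

lemma indep_nn:
  assumes k: "k \<in> I"
    and f: "(\<lambda>(\<omega>, z). f \<omega> z) \<in> borel_measurable (M \<Otimes>\<^sub>M D (fst k))"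
    and ind: "\<And>u s z z'. f (u, s(k := z')) z = f (u, s) z"
  shows "(\<integral>\<^sup>+\<omega>. f \<omega> (snd \<omega> k) \<partial>M) = (\<integral>\<^sup>+\<omega>. \<integral>\<^sup>+z. f \<omega> z \<partial>D (fst k) \<partial>M)"
proof -
  interpret P: product_sigma_finite DD by (rule DD_psf)
  have DDk: "DD k = D (fst k)" using k by (simp add: DD_def)
  interpret Dk: prob_space "D (fst k)" using DD_prob[of k] DDk by simp
  let ?J = "I - {k}"
  have Iins: "insert k ?J = I" using k by auto
  have Jfin: "finite ?J" using I_fin by auto
  interpret Pi: sigma_finite_measure "Pi\<^sub>M I DD"
    using Pi_prob prob_space_imp_sigma_finite by blast
  have fm: "(\<lambda>\<omega>. f \<omega> (snd \<omega> k)) \<in> borel_measurable M"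
  proof -
    have "(\<lambda>\<omega>. (\<omega>, snd \<omega> k)) \<in> measurable M (M \<Otimes>\<^sub>M D (fst k))"
      using meas_comp[OF k] by measurable
    from measurable_comp[OF this f] show ?thesis by (simp add: comp_def)
  qed
  have gm: "(\<lambda>\<omega>. \<integral>\<^sup>+z. f \<omega> z \<partial>D (fst k)) \<in> borel_measurable M"
    using Dk.borel_measurable_nn_integral_fst[OF f] by simp
  have key: "(\<integral>\<^sup>+s. G (u, s) \<partial>Pi\<^sub>M I DD) = (\<integral>\<^sup>+x. \<integral>\<^sup>+y. G (u, x(k:=y)) \<partial>D (fst k) \<partial>Pi\<^sub>M ?J DD)"
    if G: "G \<in> borel_measurable M" and u: "u \<in> space P0" for G u
  proof -
    have "(\<lambda>s. G (u,s)) \<in> borel_measurable (Pi\<^sub>M (insert k ?J) DD)"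
      using measurable_Pair2[of G P0 "Pi\<^sub>M I DD", OF _ u] G M_eq Iins by simp
    from P.product_nn_integral_insert[OF Jfin _ this] Iins DDk show ?thesis by simp
  qed
  have "(\<integral>\<^sup>+\<omega>. f \<omega> (snd \<omega> k) \<partial>M) = (\<integral>\<^sup>+u. \<integral>\<^sup>+s. f (u,s) (s k) \<partial>Pi\<^sub>M I DD \<partial>P0)"
    using Pi.nn_integral_fst[of "\<lambda>\<omega>. f \<omega> (snd \<omega> k)" P0] fm M_eq by simp
  also have "\<dots> = (\<integral>\<^sup>+u. \<integral>\<^sup>+x. \<integral>\<^sup>+y. f (u,x) y \<partial>D (fst k) \<partial>Pi\<^sub>M ?J DD \<partial>P0)"
  proof (rule nn_integral_cong)
    fix u assume "u \<in> space P0"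
    from key[OF fm this] show "(\<integral>\<^sup>+s. f (u,s) (s k) \<partial>Pi\<^sub>M I DD) = (\<integral>\<^sup>+x. \<integral>\<^sup>+y. f (u,x) y \<partial>D (fst k) \<partial>Pi\<^sub>M ?J DD)"
      using ind by simp
  qed
  also have "\<dots> = (\<integral>\<^sup>+u. \<integral>\<^sup>+s. \<integral>\<^sup>+z. f (u,s) z \<partial>D (fst k) \<partial>Pi\<^sub>M I DD \<partial>P0)"
  proof (rule nn_integral_cong)
    fix u assume "u \<in> space P0"
    from key[OF gm this] show "(\<integral>\<^sup>+x. \<integral>\<^sup>+y. f (u,x) y \<partial>D (fst k) \<partial>Pi\<^sub>M ?J DD) = (\<integral>\<^sup>+s. \<integral>\<^sup>+z. f (u,s) z \<partial>D (fst k) \<partial>Pi\<^sub>M I DD)"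
      using ind by (simp add: Dk.emeasure_space_1)
  qed
  also have "\<dots> = (\<integral>\<^sup>+\<omega>. \<integral>\<^sup>+z. f \<omega> z \<partial>D (fst k) \<partial>M)"
    using Pi.nn_integral_fst[of "\<lambda>\<omega>. \<integral>\<^sup>+z. f \<omega> z \<partial>D (fst k)" P0] gm M_eq by simp
  finally show ?thesis .
qed

end

context histc begin

lemma noise1:
  assumes i: "i \<in> Cl" and m: "\<And>k. m $ k \<in> {0,1}"
  shows "(\<integral>\<^sup>+z. ennreal ((norm (S + m * (gl x z - gF i x)))\<^sup>2) \<partial>D i) \<le> ennreal ((norm S)\<^sup>2) + ennreal (\<sigma>\<^sup>2)"
proof -
  interpret Di: prob_space "D i" using D_prob i by (simp add: Cl_def)
  have iC: "i \<in> (\<Union>j\<in>{1..N}. C j)" using i by (simp add: Cl_def)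
  define v where "v z = gl x z - gF i x" for z
  have glm: "(\<lambda>z. gl x z) \<in> borel_measurable (D i)"
    using meas_gl[OF i, of "\<lambda>_. x" "D i" "\<lambda>z. z"] by simp
  then have vm[measurable]: "v \<in> borel_measurable (D i)" unfolding v_def by measurable
  have vint: "integrable (D i) v" unfolding v_def using A3[OF iC, of x] by auto
  have nnv: "(\<integral>\<^sup>+z. ennreal ((norm (v z))\<^sup>2) \<partial>D i) \<le> ennreal (\<sigma>\<^sup>2)"
    unfolding v_def using A4[OF iC] by simp
  have v2int: "integrable (D i) (\<lambda>z. (norm (v z))\<^sup>2)"
    by (rule integrableI_bounded) (use nnv in \<open>auto simp: top.not_eq_extremum intro: le_less_trans\<close>)
  have v2le: "(\<integral>z. (norm (v z))\<^sup>2 \<partial>D i) \<le> \<sigma>\<^sup>2"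
  proof -
    have "ennreal (\<integral>z. (norm (v z))\<^sup>2 \<partial>D i) = (\<integral>\<^sup>+z. ennreal ((norm (v z))\<^sup>2) \<partial>D i)"
      by (rule nn_integral_eq_integral[symmetric]) (use v2int in auto)
    with nnv have "ennreal (\<integral>z. (norm (v z))\<^sup>2 \<partial>D i) \<le> ennreal (\<sigma>\<^sup>2)" by simp
    then show ?thesis by (simp add: ennreal_le_iff)
  qed
  have intv0: "(\<integral>z. v z \<partial>D i) = 0"
    unfolding v_def using A3[OF iC, of x] by (simp add: Di.prob_space)
  define F where "F z = (norm S)\<^sup>2 + 2 * ((m * S) \<bullet> v z) + (norm (v z))\<^sup>2" for z
  have pw: "(norm (S + m * v z))\<^sup>2 \<le> F z" for z
  proof -
    have "(norm (S + m * v z))\<^sup>2 = (norm S)\<^sup>2 + 2 * (S \<bullet> (m * v z)) + (norm (m * v z))\<^sup>2"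
      by (simp add: power2_norm_eq_inner inner_add_left inner_add_right inner_commute)
    also have "S \<bullet> (m * v z) = (m * S) \<bullet> v z" by (rule inner_mask_swap)
    also have "(norm (m * v z))\<^sup>2 \<le> (norm (v z))\<^sup>2"
      using norm_mask_le[OF m] by (simp add: power_mono)
    finally show ?thesis unfolding F_def by simp
  qed
  have Fint: "integrable (D i) F" unfolding F_def using vint v2int by auto
  have Fnn: "0 \<le> F z" for z using pw[of z] by (meson order_trans zero_le_power2)
  have "(\<integral>\<^sup>+z. ennreal ((norm (S + m * (gl x z - gF i x)))\<^sup>2) \<partial>D i) \<le> (\<integral>\<^sup>+z. ennreal (F z) \<partial>D i)"
    by (rule nn_integral_mono) (use pw in \<open>auto simp: v_def intro: ennreal_leI\<close>)
  also have "\<dots> = ennreal (\<integral>z. F z \<partial>D i)"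
    by (rule nn_integral_eq_integral) (use Fint Fnn in auto)
  also have "(\<integral>z. F z \<partial>D i) = (norm S)\<^sup>2 + (\<integral>z. (norm (v z))\<^sup>2 \<partial>D i)"
    unfolding F_def using vint v2int intv0 by (simp add: Di.prob_space)
  also have "ennreal \<dots> \<le> ennreal ((norm S)\<^sup>2 + \<sigma>\<^sup>2)"
    using v2le by (intro ennreal_leI) simp
  also have "\<dots> = ennreal ((norm S)\<^sup>2) + ennreal (\<sigma>\<^sup>2)" by (simp add: ennreal_plus)
  finally show ?thesis .
qed

end

context histc begin

definition "xb e j \<omega> = hist_bar gl \<gamma> H C (p (fst \<omega>)) (\<xi> \<omega>) (x0 (fst \<omega>)) e j"
definition "xl j i e h \<omega> = hist_loc gl \<gamma> (p (fst \<omega>) j) (\<xi> \<omega> i e) (xb e j \<omega>) h"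
definition "Ns j i e h \<omega> = (\<Sum>k<h. p (fst \<omega>) j * (gl (xl j i e k \<omega>) (snd \<omega> (i,e,k)) - gF i (xl j i e k \<omega>)))"

lemma xi_upd_other: "(i', e', h') \<noteq> k \<Longrightarrow> \<xi> (u, s(k := z)) i' e' h' = \<xi> (u, s) i' e' h'"
  unfolding \<xi>_def by auto

lemma xb_upd: "xb e j (u, s((i,e,h) := z)) = xb e j (u, s)"
  unfolding xb_def by simp (rule hist_bar_cong, auto simp: \<xi>_def)

lemma xl_upd: "k' \<le> h \<Longrightarrow> xl j i e k' (u, s((i,e,h) := z)) = xl j i e k' (u, s)"
  unfolding xl_def xb_upd by simp (rule hist_loc_cong, auto simp: \<xi>_def)

lemma Ns_upd: "k' \<le> h \<Longrightarrow> Ns j i e k' (u, s((i,e,h) := z)) = Ns j i e k' (u, s)"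
  unfolding Ns_def using xl_upd[of _ h] by (intro sum.cong) auto

lemma meas_xb[measurable]: "e \<le> E \<Longrightarrow> j \<in> {1..N} \<Longrightarrow> xb e j \<in> borel_measurable M"
  unfolding xb_def[abs_def] by (rule meas_bar)

lemma meas_xl[measurable]: "j \<in> {1..N} \<Longrightarrow> i \<in> C j \<Longrightarrow> e < E \<Longrightarrow> h \<le> H \<Longrightarrow> xl j i e h \<in> borel_measurable M"
  unfolding xl_def[abs_def] by (rule meas_loc) auto

lemma iCl: "j \<in> {1..N} \<Longrightarrow> i \<in> C j \<Longrightarrow> i \<in> Cl" by (auto simp: Cl_def)

lemma meas_Ns[measurable]: 
  assumes "j \<in> {1..N}" "i \<in> C j" "e < E" "h \<le> H"
  shows "Ns j i e h \<in> borel_measurable M"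
proof -
  have iC: "i \<in> Cl" using iCl[OF assms(1,2)] .
  have "(\<lambda>\<omega>. gl (xl j i e k \<omega>) (snd \<omega> (i,e,k))) \<in> borel_measurable M \<and>
    (\<lambda>\<omega>. gF i (xl j i e k \<omega>)) \<in> borel_measurable M" if "k < h" for k
  proof -
    have kI: "(i,e,k) \<in> I" using assms that iC by (auto simp: I_def)
    have xm: "xl j i e k \<in> borel_measurable M" using assms that by (intro meas_xl) auto
    have cm: "(\<lambda>\<omega>. snd \<omega> (i,e,k)) \<in> M \<rightarrow>\<^sub>M D i" using meas_comp[OF kI] by simp
    show ?thesis using meas_gl[OF iC xm cm] meas_gF[OF iC xm] by simp
  qed
  then show ?thesis unfolding Ns_def[abs_def]
    by (intro borel_measurable_sum meas_vmult borel_measurable_diff) (auto simp: meas_p)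
qed

lemma noise2:
  assumes j: "j \<in> {1..N}" and i: "i \<in> C j" and e: "e < E"
  shows "h \<le> H \<Longrightarrow> (\<integral>\<^sup>+\<omega>. ennreal ((norm (Ns j i e h \<omega>))\<^sup>2) \<partial>M) \<le> ennreal (real h * \<sigma>\<^sup>2)"
proof (induction h)
  case 0 then show ?case by (simp add: Ns_def)
next
  case (Suc h)
  interpret MP: prob_space M by (rule M_prob)
  have iC: "i \<in> Cl" using iCl[OF j i] .
  have k: "(i, e, h) \<in> I" using Suc.prems iC e by (auto simp: I_def)
  define f where "f \<omega> z = ennreal ((norm (Ns j i e h \<omega> + p (fst \<omega>) j * (gl (xl j i e h \<omega>) z - gF i (xl j i e h \<omega>))))\<^sup>2)" for \<omega> z
  have hH: "h \<le> H" using Suc.prems by simp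
  have m1: "(\<lambda>x. Ns j i e h (fst x)) \<in> borel_measurable (M \<Otimes>\<^sub>M D i)"
    using meas_Ns[OF j i e hH] by measurable
  have m2: "(\<lambda>x. xl j i e h (fst x)) \<in> borel_measurable (M \<Otimes>\<^sub>M D i)"
    using meas_xl[OF j i e hH] by measurable
  have m3: "(\<lambda>x. gl (xl j i e h (fst x)) (snd x)) \<in> borel_measurable (M \<Otimes>\<^sub>M D i)"
    by (rule meas_gl[OF iC m2]) measurable
  have m4: "(\<lambda>x. gF i (xl j i e h (fst x))) \<in> borel_measurable (M \<Otimes>\<^sub>M D i)"
    by (rule meas_gF[OF iC m2])
  have m5: "(\<lambda>x. p (fst (fst x)) j) \<in> borel_measurable (M \<Otimes>\<^sub>M D i)"
    by measurable
  have fm: "(\<lambda>(\<omega>, z). f \<omega> z) \<in> borel_measurable (M \<Otimes>\<^sub>M D (fst (i,e,h)))"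
    unfolding f_def split_beta' using m1 m3 m4 m5 by simp measurable
  have find: "f (u, s((i,e,h) := z')) z = f (u, s) z" for u s z z'
    unfolding f_def using Ns_upd[of h h] xl_upd[of h h] by simp
  have "(\<integral>\<^sup>+\<omega>. ennreal ((norm (Ns j i e (Suc h) \<omega>))\<^sup>2) \<partial>M) = (\<integral>\<^sup>+\<omega>. f \<omega> (snd \<omega> (i,e,h)) \<partial>M)"
    unfolding f_def Ns_def by simp
  also have "\<dots> = (\<integral>\<^sup>+\<omega>. \<integral>\<^sup>+z. f \<omega> z \<partial>D i \<partial>M)"
    using indep_nn[OF k fm find] by simp
  also have "\<dots> \<le> (\<integral>\<^sup>+\<omega>. ennreal ((norm (Ns j i e h \<omega>))\<^sup>2) + ennreal (\<sigma>\<^sup>2) \<partial>M)"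
    unfolding f_def by (rule nn_integral_mono, rule noise1[OF iC]) (use p_binary j in auto)
  also have "\<dots> = (\<integral>\<^sup>+\<omega>. ennreal ((norm (Ns j i e h \<omega>))\<^sup>2) \<partial>M) + ennreal (\<sigma>\<^sup>2)"
    using Suc.prems j i e by (subst nn_integral_add) (auto simp: MP.emeasure_space_1)
  also have "\<dots> \<le> ennreal (real h * \<sigma>\<^sup>2) + ennreal (\<sigma>\<^sup>2)"
    using Suc by (intro add_mono) auto
  also have "\<dots> = ennreal (real (Suc h) * \<sigma>\<^sup>2)"
    by (simp add: ennreal_plus[symmetric] algebra_simps del: ennreal_plus)
  finally show ?case .
qed

end

lemma nn_lin:
  fixes A Cc Dm :: "'a \<Rightarrow> ennreal" and B :: "nat \<Rightarrow> 'a \<Rightarrow> ennreal"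
  assumes [measurable]: "A \<in> borel_measurable K" "Cc \<in> borel_measurable K" "Dm \<in> borel_measurable K"
    and Bm: "\<And>k. k < h \<Longrightarrow> B k \<in> borel_measurable K"
  shows "(\<integral>\<^sup>+\<omega>. a * A \<omega> + b * (\<Sum>k<h. c * B k \<omega> + c * Cc \<omega> + Dm \<omega>) \<partial>K)
     = a * (\<integral>\<^sup>+\<omega>. A \<omega> \<partial>K) + b * (\<Sum>k<h. c * (\<integral>\<^sup>+\<omega>. B k \<omega> \<partial>K) + c * (\<integral>\<^sup>+\<omega>. Cc \<omega> \<partial>K) + (\<integral>\<^sup>+\<omega>. Dm \<omega> \<partial>K))"
proof -
  note [measurable] = assms(1-3)
  have Bm': "(\<lambda>\<omega>. c * B k \<omega> + c * Cc \<omega> + Dm \<omega>) \<in> borel_measurable K" if "k \<in> {..<h}" for k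
  proof -
    have [measurable]: "B k \<in> borel_measurable K" using Bm that by auto
    show ?thesis by measurable
  qed
  have S: "(\<lambda>\<omega>. \<Sum>k<h. c * B k \<omega> + c * Cc \<omega> + Dm \<omega>) \<in> borel_measurable K"
    using Bm' by (rule borel_measurable_sum)
  have "(\<integral>\<^sup>+\<omega>. a * A \<omega> + b * (\<Sum>k<h. c * B k \<omega> + c * Cc \<omega> + Dm \<omega>) \<partial>K)
      = (\<integral>\<^sup>+\<omega>. a * A \<omega> \<partial>K) + (\<integral>\<^sup>+\<omega>. b * (\<Sum>k<h. c * B k \<omega> + c * Cc \<omega> + Dm \<omega>) \<partial>K)"
    using S by (intro nn_integral_add) auto
  also have "(\<integral>\<^sup>+\<omega>. b * (\<Sum>k<h. c * B k \<omega> + c * Cc \<omega> + Dm \<omega>) \<partial>K)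
     = b * (\<Sum>k<h. \<integral>\<^sup>+\<omega>. c * B k \<omega> + c * Cc \<omega> + Dm \<omega> \<partial>K)"
    using S Bm' by (simp add: nn_integral_cmult, subst nn_integral_sum) auto
  also have "(\<Sum>k<h. \<integral>\<^sup>+\<omega>. c * B k \<omega> + c * Cc \<omega> + Dm \<omega> \<partial>K)
     = (\<Sum>k<h. c * (\<integral>\<^sup>+\<omega>. B k \<omega> \<partial>K) + c * (\<integral>\<^sup>+\<omega>. Cc \<omega> \<partial>K) + (\<integral>\<^sup>+\<omega>. Dm \<omega> \<partial>K))"
  proof (rule sum.cong)
    fix k assume k: "k \<in> {..<h}"
    note [measurable] = Bm[of k]
    show "(\<integral>\<^sup>+\<omega>. c * B k \<omega> + c * Cc \<omega> + Dm \<omega> \<partial>K) = c * (\<integral>\<^sup>+\<omega>. B k \<omega> \<partial>K) + c * (\<integral>\<^sup>+\<omega>. Cc \<omega> \<partial>K) + (\<integral>\<^sup>+\<omega>. Dm \<omega> \<partial>K)"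
      using k by (simp add: nn_integral_add nn_integral_cmult)
  qed simp
  finally show ?thesis by (simp add: nn_integral_cmult)
qed

lemma sq_le3: "(a::real) \<le> b + c + d \<Longrightarrow> 0 \<le> a \<Longrightarrow> a\<^sup>2 \<le> 3 * (b\<^sup>2 + c\<^sup>2 + d\<^sup>2)"
proof -
  assume "a \<le> b + c + d" "0 \<le> a"
  then have "a\<^sup>2 \<le> (b + c + d)\<^sup>2" by (intro power_mono) auto
  also have "\<dots> \<le> 3 * (b\<^sup>2 + c\<^sup>2 + d\<^sup>2)"
  proof -
    have h: "0 \<le> (b-c)\<^sup>2 + (c-d)\<^sup>2 + (b-d)\<^sup>2" by simp
    have e1: "(b-c)\<^sup>2 + (c-d)\<^sup>2 + (b-d)\<^sup>2 = 2*b\<^sup>2 + 2*c\<^sup>2 + 2*d\<^sup>2 - 2*(b*c) - 2*(c*d) - 2*(b*d)"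
      by (simp add: power2_eq_square algebra_simps)
    have e2: "(b + c + d)\<^sup>2 = b\<^sup>2 + c\<^sup>2 + d\<^sup>2 + 2*(b*c) + 2*(c*d) + 2*(b*d)"
      by (simp add: power2_eq_square algebra_simps)
    have e3: "3 * (b\<^sup>2 + c\<^sup>2 + d\<^sup>2) - (b + c + d)\<^sup>2 = (b-c)\<^sup>2 + (c-d)\<^sup>2 + (b-d)\<^sup>2"
      by (simp add: power2_eq_square algebra_simps)
    show ?thesis using h e3 by linarith
  qed
  finally show ?thesis .
qed

lemma norm_add_sq_le: "(norm (a + b :: 'a::real_normed_vector))\<^sup>2 \<le> 2 * (norm a)\<^sup>2 + 2 * (norm b)\<^sup>2"
proof -
  have "(norm (a + b))\<^sup>2 \<le> (norm a + norm b)\<^sup>2" by (intro power_mono norm_triangle_ineq) auto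
  also have "\<dots> \<le> 2 * (norm a)\<^sup>2 + 2 * (norm b)\<^sup>2"
    using zero_le_power2[of "norm a - norm b"] by (simp add: power2_eq_square algebra_simps)
  finally show ?thesis .
qed

context histc begin

lemma norm3: "norm (a + b + c :: 'a::real_normed_vector) \<le> norm a + norm b + norm c"
  using norm_triangle_ineq[of "a+b" c] norm_triangle_ineq[of a b] by linarith

definition "xh e \<omega> = hist_hat gl \<gamma> H C (p (fst \<omega>)) (\<xi> \<omega>) (x0 (fst \<omega>)) N e"

lemma pw:
  assumes j: "j \<in> {1..N}" and i: "i \<in> C j"
  shows "(norm (xb e j \<omega> - xl j i e h \<omega>))\<^sup>2 \<le> 2 * \<gamma>\<^sup>2 * (norm (Ns j i e h \<omega>))\<^sup>2
     + 6 * \<gamma>\<^sup>2 * real h * (\<Sum>k<h. L\<^sup>2 * (norm (xb e j \<omega> - xl j i e k \<omega>))\<^sup>2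
           + L\<^sup>2 * (norm (xh e \<omega> - xb e j \<omega>))\<^sup>2 + (norm (gF i (xh e \<omega>)))\<^sup>2)"
proof -
  have iC: "i \<in> (\<Union>j\<in>{1..N}. C j)" using i j by auto
  define m where "m = p (fst \<omega>) j"
  define G where "G = (\<Sum>k<h. m * gF i (xl j i e k \<omega>))"
  define Q where "Q k = L\<^sup>2 * (norm (xb e j \<omega> - xl j i e k \<omega>))\<^sup>2
           + L\<^sup>2 * (norm (xh e \<omega> - xb e j \<omega>))\<^sup>2 + (norm (gF i (xh e \<omega>)))\<^sup>2" for k
  have dec: "xl j i e h \<omega> - xb e j \<omega> = - \<gamma> *\<^sub>R (Ns j i e h \<omega> + G)"
    using hist_loc_decomp[of gl \<gamma> m "\<xi> \<omega> i e" "xb e j \<omega>" h "gF i"]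
    unfolding xl_def Ns_def G_def m_def by (simp add: \<xi>_def)
  have Gb: "(norm G)\<^sup>2 \<le> real h * (\<Sum>k<h. 3 * Q k)"
  proof -
    have "(norm G)\<^sup>2 \<le> real h * (\<Sum>k<h. (norm (m * gF i (xl j i e k \<omega>)))\<^sup>2)"
      unfolding G_def by (rule norm_sum_sq_le)
    also have "\<dots> \<le> real h * (\<Sum>k<h. 3 * Q k)"
    proof (intro mult_left_mono sum_mono)
      fix k assume "k \<in> {..<h}"
      have "norm (m * gF i (xl j i e k \<omega>)) \<le> norm (gF i (xl j i e k \<omega>))"
        unfolding m_def by (rule norm_mask_le) (use p_binary j in auto)
      also have "\<dots> \<le> norm (gF i (xl j i e k \<omega>) - gF i (xb e j \<omega>)) + norm (gF i (xb e j \<omega>) - gF i (xh e \<omega>)) + norm (gF i (xh e \<omega>))"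
      proof -
        have e: "gF i (xl j i e k \<omega>) = (gF i (xl j i e k \<omega>) - gF i (xb e j \<omega>)) + (gF i (xb e j \<omega>) - gF i (xh e \<omega>)) + gF i (xh e \<omega>)"
          by simp
        show ?thesis by (subst e) (rule norm3)
      qed
      also have "\<dots> \<le> L * norm (xb e j \<omega> - xl j i e k \<omega>) + L * norm (xh e \<omega> - xb e j \<omega>) + norm (gF i (xh e \<omega>))"
        using A2_lip[OF iC, of "xl j i e k \<omega>" "xb e j \<omega>"] A2_lip[OF iC, of "xb e j \<omega>" "xh e \<omega>"]
        by (simp add: norm_minus_commute)
      finally have "(norm (m * gF i (xl j i e k \<omega>)))\<^sup>2 \<le> 3 * ((L * norm (xb e j \<omega> - xl j i e k \<omega>))\<^sup>2 + (L * norm (xh e \<omega> - xb e j \<omega>))\<^sup>2 + (norm (gF i (xh e \<omega>)))\<^sup>2)"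
        by (rule sq_le3) simp
      then show "(norm (m * gF i (xl j i e k \<omega>)))\<^sup>2 \<le> 3 * Q k"
        unfolding Q_def by (simp add: power_mult_distrib)
    qed simp
    finally show ?thesis .
  qed
  have s3: "(\<Sum>k<h. 3 * Q k) = 3 * (\<Sum>k<h. Q k)" by (simp add: sum_distrib_left)
  have "(norm (xb e j \<omega> - xl j i e h \<omega>))\<^sup>2 = \<gamma>\<^sup>2 * (norm (Ns j i e h \<omega> + G))\<^sup>2"
    by (subst norm_minus_commute) (simp add: dec power_mult_distrib)
  also have "\<dots> \<le> \<gamma>\<^sup>2 * (2 * (norm (Ns j i e h \<omega>))\<^sup>2 + 2 * (norm G)\<^sup>2)"
    by (intro mult_left_mono norm_add_sq_le) auto
  also have "\<dots> \<le> \<gamma>\<^sup>2 * (2 * (norm (Ns j i e h \<omega>))\<^sup>2 + 2 * (real h * (\<Sum>k<h. 3 * Q k)))"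
    using Gb by (intro mult_left_mono add_left_mono) auto
  also have "\<dots> = 2 * \<gamma>\<^sup>2 * (norm (Ns j i e h \<omega>))\<^sup>2 + 6 * \<gamma>\<^sup>2 * real h * (\<Sum>k<h. Q k)"
    unfolding s3 by (simp add: algebra_simps)
  finally show ?thesis unfolding Q_def .
qed

end

lemma enn_helper:
  fixes a c d \<alpha> \<beta> lam :: real and b :: "nat \<Rightarrow> real"
  assumes "0 \<le> a" "0 \<le> c" "0 \<le> d" "\<And>k. 0 \<le> b k" "0 \<le> \<alpha>" "0 \<le> \<beta>" "0 \<le> lam"
  shows "ennreal (\<alpha> * a + \<beta> * (\<Sum>k<h. lam * b k + lam * c + d))
    = ennreal \<alpha> * ennreal a + ennreal \<beta> * (\<Sum>k<h. ennreal lam * ennreal (b k) + ennreal lam * ennreal c + ennreal d)"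
proof -
  have S: "0 \<le> (\<Sum>k<h. lam * b k + lam * c + d)" using assms by (intro sum_nonneg) auto
  have "ennreal (\<Sum>k<h. lam * b k + lam * c + d) = (\<Sum>k<h. ennreal (lam * b k + lam * c + d))"
    using assms by (subst sum_ennreal) auto
  also have "\<dots> = (\<Sum>k<h. ennreal lam * ennreal (b k) + ennreal lam * ennreal c + ennreal d)"
    using assms by (intro sum.cong refl) (simp add: ennreal_plus ennreal_mult)
  finally have e: "ennreal (\<Sum>k<h. lam * b k + lam * c + d) = \<dots>" .
  show ?thesis using assms S by (simp add: ennreal_plus ennreal_mult e[symmetric])
qed

lemma sum_real_nat: "2 * (\<Sum>k<h. real k) = real h * (real h - 1)"
  by (induction h) (auto simp: algebra_simps)

context histc begin

definition "R j i e h = (\<integral>\<^sup>+\<omega>. ennreal ((norm (xb e j \<omega> - xl j i e h \<omega>))\<^sup>2) \<partial>M)"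
definition "Dd j e = (\<integral>\<^sup>+\<omega>. ennreal ((norm (xh e \<omega> - xb e j \<omega>))\<^sup>2) \<partial>M)"
definition "Aa i e = (\<integral>\<^sup>+\<omega>. ennreal ((norm (gF i (xh e \<omega>)))\<^sup>2) \<partial>M)"

lemma meas_xh[measurable]: "e \<le> E \<Longrightarrow> xh e \<in> borel_measurable M"
  unfolding xh_def[abs_def] by (rule meas_hat)

lemma RH:
  assumes j: "j \<in> {1..N}" and i: "i \<in> C j" and e: "e < E" and h: "h \<le> H"
  shows "R j i e h \<le> ennreal (2 * \<gamma>\<^sup>2) * ennreal (real h * \<sigma>\<^sup>2)
     + ennreal (6 * \<gamma>\<^sup>2 * real h) * (\<Sum>k<h. ennreal (L\<^sup>2) * R j i e k + ennreal (L\<^sup>2) * Dd j e + Aa i e)"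
proof -
  have iC: "i \<in> Cl" using iCl[OF j i] .
  note [measurable] = meas_Ns[OF j i e h] meas_xb[of e j] meas_xh[of e] meas_gF[OF iC meas_xh[of e]]
  have e': "e \<le> E" using e by simp
  have mA: "(\<lambda>\<omega>. ennreal ((norm (Ns j i e h \<omega>))\<^sup>2)) \<in> borel_measurable M" by measurable
  have mC: "(\<lambda>\<omega>. ennreal ((norm (xh e \<omega> - xb e j \<omega>))\<^sup>2)) \<in> borel_measurable M"
    using e' j by measurable
  have mD: "(\<lambda>\<omega>. ennreal ((norm (gF i (xh e \<omega>)))\<^sup>2)) \<in> borel_measurable M"
    using e' by measurable
  have mB: "(\<lambda>\<omega>. ennreal ((norm (xb e j \<omega> - xl j i e k \<omega>))\<^sup>2)) \<in> borel_measurable M" if "k < h" for k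
  proof -
    have [measurable]: "xl j i e k \<in> borel_measurable M" using that h j i e by (intro meas_xl) auto
    show ?thesis using e' j by measurable
  qed
  have "R j i e h \<le> (\<integral>\<^sup>+\<omega>. ennreal (2 * \<gamma>\<^sup>2 * (norm (Ns j i e h \<omega>))\<^sup>2
     + 6 * \<gamma>\<^sup>2 * real h * (\<Sum>k<h. L\<^sup>2 * (norm (xb e j \<omega> - xl j i e k \<omega>))\<^sup>2
           + L\<^sup>2 * (norm (xh e \<omega> - xb e j \<omega>))\<^sup>2 + (norm (gF i (xh e \<omega>)))\<^sup>2)) \<partial>M)"
    unfolding R_def by (intro nn_integral_mono ennreal_leI pw[OF j i])
  also have "\<dots> = (\<integral>\<^sup>+\<omega>. ennreal (2 * \<gamma>\<^sup>2) * ennreal ((norm (Ns j i e h \<omega>))\<^sup>2)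
     + ennreal (6 * \<gamma>\<^sup>2 * real h) * (\<Sum>k<h. ennreal (L\<^sup>2) * ennreal ((norm (xb e j \<omega> - xl j i e k \<omega>))\<^sup>2)
           + ennreal (L\<^sup>2) * ennreal ((norm (xh e \<omega> - xb e j \<omega>))\<^sup>2) + ennreal ((norm (gF i (xh e \<omega>)))\<^sup>2)) \<partial>M)"
    by (intro nn_integral_cong enn_helper) auto
  also have "\<dots> = ennreal (2 * \<gamma>\<^sup>2) * (\<integral>\<^sup>+\<omega>. ennreal ((norm (Ns j i e h \<omega>))\<^sup>2) \<partial>M)
     + ennreal (6 * \<gamma>\<^sup>2 * real h) * (\<Sum>k<h. ennreal (L\<^sup>2) * R j i e k + ennreal (L\<^sup>2) * Dd j e + Aa i e)"
    unfolding R_def Dd_def Aa_def by (rule nn_lin[OF mA mC mD mB])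
  also have "\<dots> \<le> ennreal (2 * \<gamma>\<^sup>2) * ennreal (real h * \<sigma>\<^sup>2)
     + ennreal (6 * \<gamma>\<^sup>2 * real h) * (\<Sum>k<h. ennreal (L\<^sup>2) * R j i e k + ennreal (L\<^sup>2) * Dd j e + Aa i e)"
    by (intro add_right_mono mult_left_mono noise2[OF j i e h]) auto
  finally show ?thesis .
qed

end

context histc begin

lemma g2: "3 * (\<gamma>\<^sup>2 * L\<^sup>2 * (real H)\<^sup>2) \<le> 1/5"
proof -
  have Hp: "real H > 0" using H by simp
  have pos: "sqrt 15 * real H * L > 0" using Hp L_pos by simp
  have "\<gamma> * (sqrt 15 * real H * L) \<le> 1"
    using \<gamma>_le pos by (simp add: field_simps)
  then have "(\<gamma> * (sqrt 15 * real H * L))\<^sup>2 \<le> 1\<^sup>2"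
    using \<gamma>_pos pos by (intro power_mono) auto
  then have "15 * (\<gamma>\<^sup>2 * L\<^sup>2 * (real H)\<^sup>2) \<le> 1"
    by (simp add: power_mult_distrib algebra_simps)
  then show ?thesis by simp
qed

lemma RL:
  assumes h: "h \<le> H" and d: "0 \<le> d" and a: "0 \<le> a"
    and B: "B = 5/4 * (2 * \<gamma>\<^sup>2 * \<sigma>\<^sup>2 + 6 * \<gamma>\<^sup>2 * real H * (L\<^sup>2 * d + a))"
  shows "2 * \<gamma>\<^sup>2 * (real h * \<sigma>\<^sup>2) + 6 * \<gamma>\<^sup>2 * real h * (\<Sum>k<h. L\<^sup>2 * (real k * B) + L\<^sup>2 * d + a) \<le> real h * B"
proof -
  define S1 where "S1 = (\<Sum>k<h. real k)"
  have S1e: "2 * S1 = real h * (real h - 1)" unfolding S1_def by (rule sum_real_nat)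
  have sumeq: "(\<Sum>k<h. L\<^sup>2 * (real k * B) + L\<^sup>2 * d + a) = L\<^sup>2 * B * S1 + real h * (L\<^sup>2 * d + a)"
    unfolding S1_def by (induction h) (simp_all add: algebra_simps)
  have Bn: "0 \<le> B" unfolding B using d a by simp
  have hB: "0 \<le> real h * B" using Bn by simp
  have hh: "real h * (real h - 1) \<le> (real H)\<^sup>2"
  proof -
    have "real h * (real h - 1) \<le> real h * real h" by (simp add: mult_left_mono)
    also have "\<dots> \<le> real H * real H" using h by (intro mult_mono) auto
    finally show ?thesis by (simp add: power2_eq_square)
  qed
  have t1: "6 * \<gamma>\<^sup>2 * real h * (L\<^sup>2 * B * S1) \<le> real h * B / 5"
  proof -
    have "6 * \<gamma>\<^sup>2 * real h * (L\<^sup>2 * B * S1) = 3 * (\<gamma>\<^sup>2 * L\<^sup>2) * (real h * B) * (2 * S1)"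
      by (simp add: algebra_simps)
    also have "\<dots> \<le> 3 * (\<gamma>\<^sup>2 * L\<^sup>2) * (real h * B) * (real H)\<^sup>2"
      unfolding S1e using hh hB by (intro mult_left_mono) auto
    also have "\<dots> = (real h * B) * (3 * (\<gamma>\<^sup>2 * L\<^sup>2 * (real H)\<^sup>2))" by (simp add: algebra_simps)
    also have "\<dots> \<le> (real h * B) * (1/5)" using g2 hB by (intro mult_left_mono) auto
    finally show ?thesis by simp
  qed
  have t2: "6 * \<gamma>\<^sup>2 * real h * (real h * (L\<^sup>2 * d + a)) \<le> 6 * \<gamma>\<^sup>2 * real h * (real H * (L\<^sup>2 * d + a))"
    using h d a by (intro mult_left_mono mult_right_mono) auto
  have "2 * \<gamma>\<^sup>2 * (real h * \<sigma>\<^sup>2) + 6 * \<gamma>\<^sup>2 * real h * (\<Sum>k<h. L\<^sup>2 * (real k * B) + L\<^sup>2 * d + a)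
     = 2 * \<gamma>\<^sup>2 * (real h * \<sigma>\<^sup>2) + 6 * \<gamma>\<^sup>2 * real h * (L\<^sup>2 * B * S1) + 6 * \<gamma>\<^sup>2 * real h * (real h * (L\<^sup>2 * d + a))"
    unfolding sumeq by (simp add: algebra_simps)
  also have "\<dots> \<le> 2 * \<gamma>\<^sup>2 * (real h * \<sigma>\<^sup>2) + real h * B / 5 + 6 * \<gamma>\<^sup>2 * real h * (real H * (L\<^sup>2 * d + a))"
    using t1 t2 by linarith
  also have "\<dots> = real h * B"
    unfolding B by (simp add: field_simps)
  finally show ?thesis .
qed

end

context histc begin

lemma Rbound:
  assumes j: "j \<in> {1..N}" and i: "i \<in> C j" and e: "e < E"
    and Dd: "Dd j e = ennreal d" and Aa: "Aa i e = ennreal a" and d: "0 \<le> d" and a: "0 \<le> a"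
    and B: "B = 5/4 * (2 * \<gamma>\<^sup>2 * \<sigma>\<^sup>2 + 6 * \<gamma>\<^sup>2 * real H * (L\<^sup>2 * d + a))"
  shows "h \<le> H \<Longrightarrow> R j i e h \<le> ennreal (real h * B)"
proof (induction h rule: less_induct)
  case (less h)
  have Bn: "0 \<le> B" unfolding B using d a by simp
  have "R j i e h \<le> ennreal (2 * \<gamma>\<^sup>2) * ennreal (real h * \<sigma>\<^sup>2)
     + ennreal (6 * \<gamma>\<^sup>2 * real h) * (\<Sum>k<h. ennreal (L\<^sup>2) * R j i e k + ennreal (L\<^sup>2) * Dd j e + Aa i e)"
    by (rule RH[OF j i e less.prems])
  also have "\<dots> \<le> ennreal (2 * \<gamma>\<^sup>2) * ennreal (real h * \<sigma>\<^sup>2)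
     + ennreal (6 * \<gamma>\<^sup>2 * real h) * (\<Sum>k<h. ennreal (L\<^sup>2) * ennreal (real k * B) + ennreal (L\<^sup>2) * ennreal d + ennreal a)"
    unfolding Dd Aa using less by (intro add_left_mono mult_left_mono sum_mono add_right_mono) auto
  also have "\<dots> = ennreal (2 * \<gamma>\<^sup>2 * (real h * \<sigma>\<^sup>2) + 6 * \<gamma>\<^sup>2 * real h * (\<Sum>k<h. L\<^sup>2 * (real k * B) + L\<^sup>2 * d + a))"
    by (rule enn_helper[symmetric]) (use d a Bn in auto)
  also have "\<dots> \<le> ennreal (real h * B)"
    by (rule ennreal_leI, rule RL[OF less.prems d a B])
  finally show ?case .
qed

lemma PER:
  assumes j: "j \<in> {1..N}" and i: "i \<in> C j" and e: "e < E"
  shows "ennreal (1 / real H) * (\<Sum>h<H. R j i e h) \<le> ennreal (2 * \<gamma>\<^sup>2 * real H * \<sigma>\<^sup>2)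
     + ennreal (5 * \<gamma>\<^sup>2 * (real H)\<^sup>2 * L\<^sup>2) * Dd j e + ennreal (5 * \<gamma>\<^sup>2 * (real H)\<^sup>2) * Aa i e"
proof (cases "Dd j e = top \<or> Aa i e = top")
  case True
  have p1: "0 < 5 * \<gamma>\<^sup>2 * (real H)\<^sup>2 * L\<^sup>2" "0 < 5 * \<gamma>\<^sup>2 * (real H)\<^sup>2"
    using \<gamma>_pos L_pos H by auto
  from True p1 show ?thesis by (auto simp: ennreal_mult_top)
next
  case False
  then obtain d a where Dd: "Dd j e = ennreal d" and Aa: "Aa i e = ennreal a" and d: "0 \<le> d" and a: "0 \<le> a"
    by (metis ennreal_cases)
  define B where "B = 5/4 * (2 * \<gamma>\<^sup>2 * \<sigma>\<^sup>2 + 6 * \<gamma>\<^sup>2 * real H * (L\<^sup>2 * d + a))"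
  have Bn: "0 \<le> B" unfolding B_def using d a by simp
  define S1 where "S1 = (\<Sum>k<H. real k)"
  have S1e: "2 * S1 = real H * (real H - 1)" unfolding S1_def by (rule sum_real_nat)
  have S1n: "0 \<le> S1" unfolding S1_def by (simp add: sum_nonneg)
  have Hp: "0 < real H" using H by simp
  have "(\<Sum>h<H. R j i e h) \<le> (\<Sum>h<H. ennreal (real h * B))"
    by (intro sum_mono Rbound[OF j i e Dd Aa d a B_def]) auto
  also have "\<dots> = ennreal (B * S1)"
    using Bn by (simp add: S1_def sum_distrib_left mult.commute)
  finally have "ennreal (1 / real H) * (\<Sum>h<H. R j i e h) \<le> ennreal (1 / real H) * ennreal (B * S1)"
    by (rule mult_left_mono) simp
  also have "\<dots> = ennreal (B * S1 / real H)"
    using Bn S1n by (simp add: ennreal_mult[symmetric])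
  also have "\<dots> \<le> ennreal (2 * \<gamma>\<^sup>2 * real H * \<sigma>\<^sup>2 + 5 * \<gamma>\<^sup>2 * (real H)\<^sup>2 * L\<^sup>2 * d + 5 * \<gamma>\<^sup>2 * (real H)\<^sup>2 * a)"
  proof (rule ennreal_leI)
    have S1v: "S1 = real H * (real H - 1) / 2" using S1e by simp
    have "B * S1 / real H = B * (real H - 1) / 2"
      unfolding S1v using Hp by (simp add: field_simps)
    also have "\<dots> \<le> B * real H / 2" using Bn by (simp add: mult_left_mono)
    also have "\<dots> = 5/4 * \<gamma>\<^sup>2 * real H * \<sigma>\<^sup>2 + 15/4 * \<gamma>\<^sup>2 * (real H)\<^sup>2 * L\<^sup>2 * d + 15/4 * \<gamma>\<^sup>2 * (real H)\<^sup>2 * a"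
      unfolding B_def by (simp add: field_simps power2_eq_square)
    also have "\<dots> \<le> 2 * \<gamma>\<^sup>2 * real H * \<sigma>\<^sup>2 + 5 * \<gamma>\<^sup>2 * (real H)\<^sup>2 * L\<^sup>2 * d + 5 * \<gamma>\<^sup>2 * (real H)\<^sup>2 * a"
    proof -
      have "0 \<le> \<gamma>\<^sup>2 * real H * \<sigma>\<^sup>2" "0 \<le> \<gamma>\<^sup>2 * (real H)\<^sup>2 * L\<^sup>2 * d" "0 \<le> \<gamma>\<^sup>2 * (real H)\<^sup>2 * a"
        using d a by auto
      then show ?thesis by linarith
    qed
    finally show "B * S1 / real H \<le> 2 * \<gamma>\<^sup>2 * real H * \<sigma>\<^sup>2 + 5 * \<gamma>\<^sup>2 * (real H)\<^sup>2 * L\<^sup>2 * d + 5 * \<gamma>\<^sup>2 * (real H)\<^sup>2 * a" .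
  qed
  also have "\<dots> = ennreal (2 * \<gamma>\<^sup>2 * real H * \<sigma>\<^sup>2)
     + ennreal (5 * \<gamma>\<^sup>2 * (real H)\<^sup>2 * L\<^sup>2) * Dd j e + ennreal (5 * \<gamma>\<^sup>2 * (real H)\<^sup>2) * Aa i e"
    unfolding Dd Aa using d a by (simp add: ennreal_plus ennreal_mult)
  finally show ?thesis .
qed

end

lemma var_id:
  fixes v :: "nat \<Rightarrow> 'a::real_inner"
  assumes fin: "finite A" and ne: "A \<noteq> {}"
  defines "\<mu> \<equiv> (1 / real (card A)) *\<^sub>R (\<Sum>i\<in>A. v i)"
  shows "(\<Sum>i\<in>A. (norm (v i))\<^sup>2) = real (card A) * (norm \<mu>)\<^sup>2 + (\<Sum>i\<in>A. (norm (v i - \<mu>))\<^sup>2)"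
proof -
  have cp: "real (card A) > 0" using fin ne by (simp add: card_gt_0_iff)
  have sv: "(\<Sum>i\<in>A. v i) = real (card A) *\<^sub>R \<mu>" unfolding \<mu>_def using cp by simp
  have "(\<Sum>i\<in>A. (norm (v i - \<mu>))\<^sup>2) = (\<Sum>i\<in>A. (norm (v i))\<^sup>2 - 2 * (v i \<bullet> \<mu>) + (norm \<mu>)\<^sup>2)"
    by (intro sum.cong refl) (simp add: power2_norm_eq_inner inner_diff_left inner_diff_right inner_commute)
  also have "\<dots> = (\<Sum>i\<in>A. (norm (v i))\<^sup>2) - 2 * ((\<Sum>i\<in>A. v i) \<bullet> \<mu>) + real (card A) * (norm \<mu>)\<^sup>2"
    by (simp add: sum.distrib sum_subtractf inner_sum_left sum_distrib_left)
  also have "(\<Sum>i\<in>A. v i) \<bullet> \<mu> = real (card A) * (norm \<mu>)\<^sup>2"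
    unfolding sv by (simp add: power2_norm_eq_inner)
  finally show ?thesis by simp
qed

context histc begin

lemma GD:
  "(\<Sum>j\<in>{1..N}. (1 / real (card (C j))) * (\<Sum>i\<in>C j. (norm (gF i x))\<^sup>2))
     \<le> real N * (norm (grad_f gF C N x))\<^sup>2 + real N * \<delta>\<^sub>1\<^sup>2 + real N * \<delta>\<^sub>2\<^sup>2"
proof -
  have cell: "(1 / real (card (C j))) * (\<Sum>i\<in>C j. (norm (gF i x))\<^sup>2) \<le> (norm (grad_fj gF C j x))\<^sup>2 + \<delta>\<^sub>2\<^sup>2"
    if j: "j \<in> {1..N}" for j
  proof -
    have cp: "real (card (C j)) > 0" using C_fin[OF j] C_ne[OF j] by (simp add: card_gt_0_iff)
    have "(\<Sum>i\<in>C j. (norm (gF i x))\<^sup>2) = real (card (C j)) * (norm (grad_fj gF C j x))\<^sup>2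
        + (\<Sum>i\<in>C j. (norm (gF i x - grad_fj gF C j x))\<^sup>2)"
      unfolding grad_fj_def by (rule var_id[OF C_fin[OF j] C_ne[OF j]])
    then have "(1 / real (card (C j))) * (\<Sum>i\<in>C j. (norm (gF i x))\<^sup>2) = (norm (grad_fj gF C j x))\<^sup>2
        + (1 / real (card (C j))) * (\<Sum>i\<in>C j. (norm (gF i x - grad_fj gF C j x))\<^sup>2)"
      using cp by (simp add: field_simps)
    then show ?thesis using A6[OF j, of x] by linarith
  qed
  have Np: "real N > 0" using N by simp
  have "(\<Sum>j\<in>{1..N}. (norm (grad_fj gF C j x))\<^sup>2) = real N * (norm (grad_f gF C N x))\<^sup>2
      + (\<Sum>j\<in>{1..N}. (norm (grad_fj gF C j x - grad_f gF C N x))\<^sup>2)"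
    using var_id[of "{1..N}" "\<lambda>j. grad_fj gF C j x"] N unfolding grad_f_def by simp
  moreover have "(\<Sum>j\<in>{1..N}. (norm (grad_fj gF C j x - grad_f gF C N x))\<^sup>2) \<le> real N * \<delta>\<^sub>1\<^sup>2"
    using A5[of x] Np by (simp add: field_simps)
  moreover have "(\<Sum>j\<in>{1..N}. (1 / real (card (C j))) * (\<Sum>i\<in>C j. (norm (gF i x))\<^sup>2))
      \<le> (\<Sum>j\<in>{1..N}. (norm (grad_fj gF C j x))\<^sup>2 + \<delta>\<^sub>2\<^sup>2)"
    by (rule sum_mono) (rule cell)
  moreover have "(\<Sum>j\<in>{1..N}. (norm (grad_fj gF C j x))\<^sup>2 + \<delta>\<^sub>2\<^sup>2)
      = (\<Sum>j\<in>{1..N}. (norm (grad_fj gF C j x))\<^sup>2) + real N * \<delta>\<^sub>2\<^sup>2"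
    by (simp add: sum.distrib)
  ultimately show ?thesis by linarith
qed

end

context histc begin

definition "G e = (\<integral>\<^sup>+\<omega>. ennreal ((norm (grad_f gF C N (xh e \<omega>)))\<^sup>2) \<partial>M)"

lemma meas_gradf:
  assumes "e \<le> E"
  shows "(\<lambda>\<omega>. grad_f gF C N (xh e \<omega>)) \<in> borel_measurable M"
proof -
  have "(\<lambda>\<omega>. gF i (xh e \<omega>)) \<in> borel_measurable M" if "j \<in> {1..N}" "i \<in> C j" for i j
    using meas_gF[OF iCl[OF that] meas_xh[OF assms]] .
  then show ?thesis unfolding grad_f_def grad_fj_def
    by (intro borel_measurable_scaleR borel_measurable_sum borel_measurable_const) auto
qed

lemma cellsum:
  assumes e: "e < E"
  shows "(\<Sum>j\<in>{1..N}. ennreal (1 / real (card (C j))) * (\<Sum>i\<in>C j. Aa i e))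
    \<le> ennreal (real N) * G e + ennreal (real N * \<delta>\<^sub>1\<^sup>2) + ennreal (real N * \<delta>\<^sub>2\<^sup>2)"
proof -
  interpret MP: prob_space M by (rule M_prob)
  have e': "e \<le> E" using e by simp
  have mi: "(\<lambda>\<omega>. ennreal ((norm (gF i (xh e \<omega>)))\<^sup>2)) \<in> borel_measurable M" if "j \<in> {1..N}" "i \<in> C j" for i j
    using meas_gF[OF iCl[OF that] meas_xh[OF e']] by measurable
  have mg: "(\<lambda>\<omega>. ennreal ((norm (grad_f gF C N (xh e \<omega>)))\<^sup>2)) \<in> borel_measurable M"
    using meas_gradf[OF e'] by measurable
  have "(\<Sum>j\<in>{1..N}. ennreal (1 / real (card (C j))) * (\<Sum>i\<in>C j. Aa i e))
     = (\<Sum>j\<in>{1..N}. \<integral>\<^sup>+\<omega>. ennreal (1 / real (card (C j))) * (\<Sum>i\<in>C j. ennreal ((norm (gF i (xh e \<omega>)))\<^sup>2)) \<partial>M)"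
  proof (rule sum.cong[OF refl])
    fix j assume j: "j \<in> {1..N}"
    have "(\<Sum>i\<in>C j. Aa i e) = (\<integral>\<^sup>+\<omega>. (\<Sum>i\<in>C j. ennreal ((norm (gF i (xh e \<omega>)))\<^sup>2)) \<partial>M)"
      unfolding Aa_def using mi[OF j] by (subst nn_integral_sum) auto
    moreover have "(\<lambda>\<omega>. (\<Sum>i\<in>C j. ennreal ((norm (gF i (xh e \<omega>)))\<^sup>2))) \<in> borel_measurable M"
      using mi[OF j] by (intro borel_measurable_sum) auto
    ultimately show "ennreal (1 / real (card (C j))) * (\<Sum>i\<in>C j. Aa i e)
      = (\<integral>\<^sup>+\<omega>. ennreal (1 / real (card (C j))) * (\<Sum>i\<in>C j. ennreal ((norm (gF i (xh e \<omega>)))\<^sup>2)) \<partial>M)"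
      by (simp add: nn_integral_cmult)
  qed
  also have "\<dots> = (\<integral>\<^sup>+\<omega>. (\<Sum>j\<in>{1..N}. ennreal (1 / real (card (C j))) * (\<Sum>i\<in>C j. ennreal ((norm (gF i (xh e \<omega>)))\<^sup>2))) \<partial>M)"
  proof (rule nn_integral_sum[symmetric])
    fix j assume j: "j \<in> {1..N}"
    have "(\<lambda>\<omega>. (\<Sum>i\<in>C j. ennreal ((norm (gF i (xh e \<omega>)))\<^sup>2))) \<in> borel_measurable M"
      using mi[OF j] by (intro borel_measurable_sum) auto
    then show "(\<lambda>\<omega>. ennreal (1 / real (card (C j))) * (\<Sum>i\<in>C j. ennreal ((norm (gF i (xh e \<omega>)))\<^sup>2))) \<in> borel_measurable M"
      by measurable
  qed
  also have "\<dots> = (\<integral>\<^sup>+\<omega>. ennreal (\<Sum>j\<in>{1..N}. (1 / real (card (C j))) * (\<Sum>i\<in>C j. (norm (gF i (xh e \<omega>)))\<^sup>2)) \<partial>M)"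
  proof (intro nn_integral_cong)
    fix \<omega>
    show "(\<Sum>j\<in>{1..N}. ennreal (1 / real (card (C j))) * (\<Sum>i\<in>C j. ennreal ((norm (gF i (xh e \<omega>)))\<^sup>2)))
      = ennreal (\<Sum>j\<in>{1..N}. (1 / real (card (C j))) * (\<Sum>i\<in>C j. (norm (gF i (xh e \<omega>)))\<^sup>2))"
    proof (subst sum_ennreal[symmetric])
      show "0 \<le> (1 / real (card (C j))) * (\<Sum>i\<in>C j. (norm (gF i (xh e \<omega>)))\<^sup>2)" for j
        by (intro mult_nonneg_nonneg sum_nonneg) auto
      show "(\<Sum>j\<in>{1..N}. ennreal (1 / real (card (C j))) * (\<Sum>i\<in>C j. ennreal ((norm (gF i (xh e \<omega>)))\<^sup>2)))
        = (\<Sum>j\<in>{1..N}. ennreal ((1 / real (card (C j))) * (\<Sum>i\<in>C j. (norm (gF i (xh e \<omega>)))\<^sup>2)))"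
        by (intro sum.cong refl, subst ennreal_mult) (auto intro: sum_nonneg)
    qed
  qed
  also have "\<dots> \<le> (\<integral>\<^sup>+\<omega>. ennreal (real N * (norm (grad_f gF C N (xh e \<omega>)))\<^sup>2 + real N * \<delta>\<^sub>1\<^sup>2 + real N * \<delta>\<^sub>2\<^sup>2) \<partial>M)"
    by (intro nn_integral_mono ennreal_leI GD)
  also have "\<dots> = (\<integral>\<^sup>+\<omega>. ennreal (real N) * ennreal ((norm (grad_f gF C N (xh e \<omega>)))\<^sup>2) + ennreal (real N * \<delta>\<^sub>1\<^sup>2) + ennreal (real N * \<delta>\<^sub>2\<^sup>2) \<partial>M)"
    by (intro nn_integral_cong) (simp add: ennreal_plus ennreal_mult)
  also have "\<dots> = ennreal (real N) * G e + ennreal (real N * \<delta>\<^sub>1\<^sup>2) + ennreal (real N * \<delta>\<^sub>2\<^sup>2)"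
    unfolding G_def using mg
    by (simp add: nn_integral_add nn_integral_cmult MP.emeasure_space_1)
  finally show ?thesis .
qed

end

context histc begin

lemma FIN:
 "(\<Sum>j\<in>{1..N}. ennreal (1 / real (card (C j))) * (\<Sum>i\<in>C j. ennreal (1 / real H) * (\<Sum>e<E. \<Sum>h<H. R j i e h)))
  \<le> ennreal (5 * \<gamma>\<^sup>2 * (real H)\<^sup>2 * L\<^sup>2) * (\<Sum>j\<in>{1..N}. \<Sum>e<E. Dd j e)
   + ennreal (5 * \<gamma>\<^sup>2 * real N * (real H)\<^sup>2) * (\<Sum>e<E. G e)
   + ennreal (2 * \<gamma>\<^sup>2 * real N * real H * real E * \<sigma>\<^sup>2)
   + ennreal (5 * \<gamma>\<^sup>2 * real N * (real H)\<^sup>2 * real E * \<delta>\<^sub>2\<^sup>2)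
   + ennreal (5 * \<gamma>\<^sup>2 * real N * (real H)\<^sup>2 * real E * \<delta>\<^sub>1\<^sup>2)"
proof -
  define A where "A = ennreal (2 * \<gamma>\<^sup>2 * real H * \<sigma>\<^sup>2)"
  define B where "B = ennreal (5 * \<gamma>\<^sup>2 * (real H)\<^sup>2 * L\<^sup>2)"
  define Cc where "Cc = ennreal (5 * \<gamma>\<^sup>2 * (real H)\<^sup>2)"
  define W where "W j e = ennreal (1 / real (card (C j))) * (\<Sum>i\<in>C j. Aa i e)" for j e
  have inv: "ennreal (1 / real (card (C j))) * of_nat (card (C j)) = 1" if "j \<in> {1..N}" for j
  proof -
    have "card (C j) > 0" using C_fin[OF that] C_ne[OF that] by (simp add: card_gt_0_iff)
    then show ?thesis
      by (simp add: ennreal_of_nat_eq_real_of_nat ennreal_mult[symmetric])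
  qed
  have T: "ennreal (1 / real (card (C j))) * (\<Sum>i\<in>C j. ennreal (1 / real H) * (\<Sum>h<H. R j i e h))
     \<le> A + B * Dd j e + Cc * W j e" if j: "j \<in> {1..N}" and e: "e < E" for j e
  proof -
    have "ennreal (1 / real (card (C j))) * (\<Sum>i\<in>C j. ennreal (1 / real H) * (\<Sum>h<H. R j i e h))
       \<le> ennreal (1 / real (card (C j))) * (\<Sum>i\<in>C j. A + B * Dd j e + Cc * Aa i e)"
      unfolding A_def B_def Cc_def by (intro mult_left_mono sum_mono PER[OF j _ e]) auto
    also have "\<dots> = (ennreal (1 / real (card (C j))) * of_nat (card (C j))) * (A + B * Dd j e) + Cc * W j e"
      unfolding W_def by (simp add: sum.distrib sum_distrib_left[symmetric] algebra_simps)
    also have "\<dots> = A + B * Dd j e + Cc * W j e" using inv[OF j] by simp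
    finally show ?thesis .
  qed
  have "(\<Sum>j\<in>{1..N}. ennreal (1 / real (card (C j))) * (\<Sum>i\<in>C j. ennreal (1 / real H) * (\<Sum>e<E. \<Sum>h<H. R j i e h)))
     = (\<Sum>j\<in>{1..N}. \<Sum>e<E. ennreal (1 / real (card (C j))) * (\<Sum>i\<in>C j. ennreal (1 / real H) * (\<Sum>h<H. R j i e h)))"
  proof (rule sum.cong[OF refl])
    fix j
    show "ennreal (1 / real (card (C j))) * (\<Sum>i\<in>C j. ennreal (1 / real H) * (\<Sum>e<E. \<Sum>h<H. R j i e h))
       = (\<Sum>e<E. ennreal (1 / real (card (C j))) * (\<Sum>i\<in>C j. ennreal (1 / real H) * (\<Sum>h<H. R j i e h)))"
      by (simp add: sum_distrib_left sum.swap[of _ "C j"])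
  qed
  also have "\<dots> \<le> (\<Sum>j\<in>{1..N}. \<Sum>e<E. A + B * Dd j e + Cc * W j e)"
    by (intro sum_mono T) auto
  also have "\<dots> = of_nat N * (of_nat E * A) + B * (\<Sum>j\<in>{1..N}. \<Sum>e<E. Dd j e) + Cc * (\<Sum>e<E. \<Sum>j\<in>{1..N}. W j e)"
  proof -
    have "(\<Sum>j\<in>{1..N}. \<Sum>e<E. A + B * Dd j e + Cc * W j e) = (\<Sum>j\<in>{1..N}. \<Sum>e<E. A) + B * (\<Sum>j\<in>{1..N}. \<Sum>e<E. Dd j e) + Cc * (\<Sum>j\<in>{1..N}. \<Sum>e<E. W j e)"
      by (simp only: sum.distrib sum_distrib_left)
    also have "(\<Sum>j\<in>{1..N}. \<Sum>e<E. W j e) = (\<Sum>e<E. \<Sum>j\<in>{1..N}. W j e)" by (rule sum.swap)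
    also have "(\<Sum>j\<in>{1..N}. \<Sum>e<E. A) = of_nat N * (of_nat E * A)" by simp
    finally show ?thesis .
  qed
  also have "\<dots> \<le> of_nat N * (of_nat E * A) + B * (\<Sum>j\<in>{1..N}. \<Sum>e<E. Dd j e)
      + Cc * (\<Sum>e<E. ennreal (real N) * G e + ennreal (real N * \<delta>\<^sub>1\<^sup>2) + ennreal (real N * \<delta>\<^sub>2\<^sup>2))"
    unfolding W_def by (intro add_left_mono mult_left_mono sum_mono cellsum) auto
  also have "\<dots> = B * (\<Sum>j\<in>{1..N}. \<Sum>e<E. Dd j e)
   + (Cc * ennreal (real N)) * (\<Sum>e<E. G e)
   + of_nat N * (of_nat E * A)
   + Cc * (of_nat E * ennreal (real N * \<delta>\<^sub>2\<^sup>2))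
   + Cc * (of_nat E * ennreal (real N * \<delta>\<^sub>1\<^sup>2))"
    by (simp add: sum.distrib sum_distrib_left algebra_simps)
  also have "\<dots> = ennreal (5 * \<gamma>\<^sup>2 * (real H)\<^sup>2 * L\<^sup>2) * (\<Sum>j\<in>{1..N}. \<Sum>e<E. Dd j e)
   + ennreal (5 * \<gamma>\<^sup>2 * real N * (real H)\<^sup>2) * (\<Sum>e<E. G e)
   + ennreal (2 * \<gamma>\<^sup>2 * real N * real H * real E * \<sigma>\<^sup>2)
   + ennreal (5 * \<gamma>\<^sup>2 * real N * (real H)\<^sup>2 * real E * \<delta>\<^sub>2\<^sup>2)
   + ennreal (5 * \<gamma>\<^sup>2 * real N * (real H)\<^sup>2 * real E * \<delta>\<^sub>1\<^sup>2)"
  proof -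
    have e1: "Cc * ennreal (real N) = ennreal (5 * \<gamma>\<^sup>2 * real N * (real H)\<^sup>2)"
      unfolding Cc_def by (simp add: ennreal_mult[symmetric] mult_ac)
    have e2: "of_nat N * (of_nat E * A) = ennreal (2 * \<gamma>\<^sup>2 * real N * real H * real E * \<sigma>\<^sup>2)"
      unfolding A_def by (simp add: ennreal_of_nat_eq_real_of_nat ennreal_mult[symmetric] mult_ac)
    have e3: "Cc * (of_nat E * ennreal (real N * x)) = ennreal (5 * \<gamma>\<^sup>2 * real N * (real H)\<^sup>2 * real E * x)" if "0 \<le> x" for x
      unfolding Cc_def using that by (simp add: ennreal_of_nat_eq_real_of_nat ennreal_mult[symmetric] mult_ac)
    show ?thesis unfolding B_def e1 e2 e3[OF zero_le_power2] ..
  qed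
  finally show ?thesis .
qed

end

theorem lemma4:
  fixes N E H :: nat
    and C :: "nat \<Rightarrow> nat set"
    and D :: "nat \<Rightarrow> 'b measure"
    and l :: "real^'d \<Rightarrow> 'b \<Rightarrow> real"
    and gl :: "real^'d \<Rightarrow> 'b \<Rightarrow> real^'d"
    and F :: "nat \<Rightarrow> real^'d \<Rightarrow> real"
    and gF :: "nat \<Rightarrow> real^'d \<Rightarrow> real^'d"
    and \<gamma> L \<sigma> \<delta>\<^sub>1 \<delta>\<^sub>2 :: real
    and P0 :: "'o measure"
    and x0 :: "'o \<Rightarrow> real^'d"
    and p :: "'o \<Rightarrow> nat \<Rightarrow> real^'d"
  defines "Cl \<equiv> (\<Union>j\<in>{1..N}. C j)"
  defines "I \<equiv> {(i, e, h). i \<in> Cl \<and> e < E \<and> h < H}"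
  defines "M \<equiv> P0 \<Otimes>\<^sub>M (\<Pi>\<^sub>M k\<in>I. D (fst k))"
  defines "\<xi> \<equiv> (\<lambda>\<omega> :: 'o \<times> (nat \<times> nat \<times> nat \<Rightarrow> 'b). \<lambda>i e h. snd \<omega> (i, e, h))"
  \<comment> \<open>cells, clients, round lengths\<close>
  assumes N: "N \<ge> 1" and E: "E \<ge> 1" and H: "H \<ge> 1"
    and C_fin: "\<And>j. j \<in> {1..N} \<Longrightarrow> finite (C j)"
    and C_ne: "\<And>j. j \<in> {1..N} \<Longrightarrow> C j \<noteq> {}"
    and C_disj: "\<And>j j'. j \<in> {1..N} \<Longrightarrow> j' \<in> {1..N} \<Longrightarrow> j \<noteq> j' \<Longrightarrow> C j \<inter> C j' = {}"
  \<comment> \<open>client distributions, losses, stochastic gradients\<close>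
    and D_prob: "\<And>i. i \<in> Cl \<Longrightarrow> prob_space (D i)"
    and l_grad: "\<And>x \<xi>'. ((\<lambda>y. l y \<xi>') has_derivative (\<lambda>v. gl x \<xi>' \<bullet> v)) (at x)"
    and gl_meas: "\<And>i. i \<in> Cl \<Longrightarrow> (\<lambda>(x, \<xi>'). gl x \<xi>') \<in> borel_measurable (borel \<Otimes>\<^sub>M D i)"
    and F_def: "\<And>i x. i \<in> Cl \<Longrightarrow> F i x = (\<integral>\<xi>'. l x \<xi>' \<partial>D i)"
  \<comment> \<open>(A2)\<close>
    and A2_diff: "\<And>i x. i \<in> Cl \<Longrightarrow> ((F i) has_derivative (\<lambda>v. gF i x \<bullet> v)) (at x)"
    and A2_lip: "\<And>i x y. i \<in> Cl \<Longrightarrow> norm (gF i x - gF i y) \<le> L * norm (x - y)"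
    and A2_smooth: "\<And>i x y. i \<in> Cl \<Longrightarrow> F i y \<le> F i x + gF i x \<bullet> (y - x) + L / 2 * (norm (y - x))\<^sup>2"
  \<comment> \<open>(A3)\<close>
    and A3: "\<And>i x. i \<in> Cl \<Longrightarrow> integrable (D i) (\<lambda>\<xi>'. gl x \<xi>') \<and> (\<integral>\<xi>'. gl x \<xi>' \<partial>D i) = gF i x"
  \<comment> \<open>(A4)\<close>
    and A4: "\<And>i x. i \<in> Cl \<Longrightarrow> (\<integral>\<^sup>+\<xi>'. ennreal ((norm (gl x \<xi>' - gF i x))\<^sup>2) \<partial>D i) \<le> ennreal (\<sigma>\<^sup>2)"
  \<comment> \<open>(A5)\<close>
    and A5: "\<And>x. (1 / real N) * (\<Sum>j\<in>{1..N}. (norm (grad_fj gF C j x - grad_f gF C N x))\<^sup>2) \<le> \<delta>\<^sub>1\<^sup>2"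
  \<comment> \<open>(A6)\<close>
    and A6: "\<And>j x. j \<in> {1..N} \<Longrightarrow>
       (1 / real (card (C j))) * (\<Sum>i\<in>C j. (norm (gF i x - grad_fj gF C j x))\<^sup>2) \<le> \<delta>\<^sub>2\<^sup>2"
  \<comment> \<open>state at the start of round t (global model and masks), independent of the fresh samples\<close>
    and P0_prob: "prob_space P0"
    and x0_meas: "x0 \<in> borel_measurable P0"
    and p_meas: "\<And>j. (\<lambda>\<omega>. p \<omega> j) \<in> borel_measurable P0"
    and p_binary: "\<And>\<omega> j k. j \<in> {1..N} \<Longrightarrow> p \<omega> j $ k \<in> {0, 1}"
    and p_disj: "\<And>\<omega> j j'. j \<in> {1..N} \<Longrightarrow> j' \<in> {1..N} \<Longrightarrow> j \<noteq> j' \<Longrightarrow> p \<omega> j * p \<omega> j' = 0"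
    and p_sum: "\<And>\<omega>. (\<Sum>j\<in>{1..N}. p \<omega> j) = 1"
  \<comment> \<open>step size\<close>
    and \<gamma>_pos: "\<gamma> > 0" and L_pos: "L > 0"
    and \<gamma>_le: "\<gamma> \<le> 1 / (sqrt 15 * real H * L)"
  shows
   "(\<Sum>j\<in>{1..N}. ennreal (1 / real (card (C j))) * (\<Sum>i\<in>C j. ennreal (1 / real H) *
       (\<Sum>e<E. \<Sum>h<H. \<integral>\<^sup>+\<omega>. ennreal ((norm (
          hist_bar gl \<gamma> H C (p (fst \<omega>)) (\<xi> \<omega>) (x0 (fst \<omega>)) e j
        - hist_x gl \<gamma> H C (p (fst \<omega>)) (\<xi> \<omega>) (x0 (fst \<omega>)) j i e h))\<^sup>2) \<partial>M)))
    \<le> ennreal (5 * \<gamma>\<^sup>2 * (real H)\<^sup>2 * L\<^sup>2) *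
       (\<Sum>j\<in>{1..N}. \<Sum>e<E. \<integral>\<^sup>+\<omega>. ennreal ((norm (
          hist_hat gl \<gamma> H C (p (fst \<omega>)) (\<xi> \<omega>) (x0 (fst \<omega>)) N e
        - hist_bar gl \<gamma> H C (p (fst \<omega>)) (\<xi> \<omega>) (x0 (fst \<omega>)) e j))\<^sup>2) \<partial>M)
     + ennreal (5 * \<gamma>\<^sup>2 * real N * (real H)\<^sup>2) *
       (\<Sum>e<E. \<integral>\<^sup>+\<omega>. ennreal ((norm (grad_f gF C N
          (hist_hat gl \<gamma> H C (p (fst \<omega>)) (\<xi> \<omega>) (x0 (fst \<omega>)) N e)))\<^sup>2) \<partial>M)
     + ennreal (2 * \<gamma>\<^sup>2 * real N * real H * real E * \<sigma>\<^sup>2)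
     + ennreal (5 * \<gamma>\<^sup>2 * real N * (real H)\<^sup>2 * real E * \<delta>\<^sub>2\<^sup>2)
     + ennreal (5 * \<gamma>\<^sup>2 * real N * (real H)\<^sup>2 * real E * \<delta>\<^sub>1\<^sup>2)"
proof -
  interpret H0: histc N E H C D gl gF \<gamma> L \<sigma> \<delta>\<^sub>1 \<delta>\<^sub>2 P0 x0 p
    apply (rule histc.intro)
    apply (fact N)
    apply (fact H)
    apply (fact C_fin)
    apply (fact C_ne)
    apply (fact D_prob[unfolded Cl_def])
    apply (fact gl_meas[unfolded Cl_def])
    apply (fact A2_lip[unfolded Cl_def])
    apply (fact A3[unfolded Cl_def])
    apply (fact A4[unfolded Cl_def])
    apply (fact A5)
    apply (fact A6)
    apply (fact P0_prob)
    apply (fact x0_meas)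
    apply (fact p_meas)
    apply (fact p_binary)
    apply (fact \<gamma>_pos)
    apply (fact L_pos)
    apply (fact \<gamma>_le)
    done
  show ?thesis
    using H0.FIN
    unfolding H0.R_def H0.Dd_def H0.G_def H0.xb_def H0.xl_def H0.xh_def H0.M_def H0.\<xi>_def H0.I_def H0.Cl_def
    unfolding M_def \<xi>_def I_def Cl_def hist_x_def
    .
qed

end
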